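(* There exist (vertex-colored) graphs $G, H$ with a permutation equivariant filtration such that the forward persistence diagrams of $G$ and $H$ coincide in all degrees but their backward persistence diagrams differ. Similarly, there exist graphs $G,H$ with a permutation equivariant filtration such that their backward persistence diagrams coincide in all degrees but their forward persistence diagrams differ.
   Context: Graphs are finite, undirected, possibly with self-loops and multi-edges, regarded as topological spaces. A filtration function on $G=(V,E)$ is $f: V\cup E\to\mathbb{R}$ with $f(v),f(w)\le f(e)$ for each edge $e$ with endpoints $v,w$. With distinct values $a_0<\dots<a_n$, put $G_{-1}=\emptyset$, $G_i=f^{-1}((-\infty,a_i])$. The intermediate complex $\mathrm{IC}_i(G,f)$ consists of the vertices and edges of $G_i\setminus G_{i-1}$ together with the endpoints of those edges. For a sequence of spaces and maps, applying $H_k(-;\mathbb{Z}/2)$ gives a persistence module whose $k$-th persistence diagram is the multiset of intervals $(b,d)$ of its interval decomposition, indexed by positions in the sequence. Forward persistence: diagrams of $G_0\subset\dots\subset G_n$. Backward persistence: diagrams of $G\to G/\mathrm{IC}_n(G)\to (G/\mathrm{IC}_n(G))/( *\cup\mathrm{IC}_{n-1}(G))\to\dots\to\text{point}$, contracting $\mathrm{IC}_n,\dots,\mathrm{IC}_0$ in turn, where $*$ is the point to which all previously contracted pieces are collapsed, with quotient maps. A permutation equivariant filtration is a rule assigning to each (possibly vertex-colored) graph $G$ a filtration function $f_G$ such that $f_H\circ\varphi=f_G$ for every (color-preserving) graph isomorphism $\varphi:G\to H$ (e.g. vertex-color filtrations, degree filtration). *)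

theory Defs
  imports "HOL-Library.Z2" "HOL-Library.Extended_Nat" "HOL-Library.Function_Algebras"
begin

section \<open>Graphs (finite, undirected, loops and multi-edges allowed, vertex-coloured)\<close>

record graph =
  gV   :: "nat set"
  gE   :: "nat set"
  ends :: "nat \<Rightarrow> nat \<times> nat"   \<comment> \<open>endpoints of an edge; unordered, a loop has equal endpoints\<close>
  col  :: "nat \<Rightarrow> nat"          \<comment> \<open>vertex colours (constant colour = uncoloured graph)\<close>

definition wf_graph :: "graph \<Rightarrow> bool" where
  "wf_graph G \<longleftrightarrow> finite (gV G) \<and> finite (gE G) \<and>
     (\<forall>e\<in>gE G. fst (ends G e) \<in> gV G \<and> snd (ends G e) \<in> gV G)"

definition graph_iso :: "graph \<Rightarrow> graph \<Rightarrow> (nat \<Rightarrow> nat) \<Rightarrow> (nat \<Rightarrow> nat) \<Rightarrow> bool" where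
  "graph_iso G H pv pe \<longleftrightarrow>
     bij_betw pv (gV G) (gV H) \<and> bij_betw pe (gE G) (gE H) \<and>
     (\<forall>e\<in>gE G. ends H (pe e) = (pv (fst (ends G e)), pv (snd (ends G e))) \<or>
                ends H (pe e) = (pv (snd (ends G e)), pv (fst (ends G e)))) \<and>
     (\<forall>v\<in>gV G. col H (pv v) = col G v)"

text \<open>A filtration function on G is given by its values on vertices and on edges.\<close>
type_synonym filt = "(nat \<Rightarrow> real) \<times> (nat \<Rightarrow> real)"

definition is_filtration :: "graph \<Rightarrow> filt \<Rightarrow> bool" where
  "is_filtration G f \<longleftrightarrow>
     (\<forall>e\<in>gE G. fst f (fst (ends G e)) \<le> snd f e \<and> fst f (snd (ends G e)) \<le> snd f e)"

definition perm_equiv_filtration :: "(graph \<Rightarrow> filt) \<Rightarrow> bool" where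
  "perm_equiv_filtration F \<longleftrightarrow>
     (\<forall>G. wf_graph G \<longrightarrow> is_filtration G (F G)) \<and>
     (\<forall>G H pv pe. wf_graph G \<longrightarrow> wf_graph H \<longrightarrow> graph_iso G H pv pe \<longrightarrow>
        (\<forall>v\<in>gV G. fst (F H) (pv v) = fst (F G) v) \<and>
        (\<forall>e\<in>gE G. snd (F H) (pe e) = snd (F G) e))"

text \<open>Distinct values a_0 < ... < a_n (as a sorted list; n+1 = its length).\<close>
definition fvals :: "graph \<Rightarrow> filt \<Rightarrow> real list" where
  "fvals G f = sorted_list_of_set (fst f ` gV G \<union> snd f ` gE G)"

definition nvals :: "graph \<Rightarrow> filt \<Rightarrow> nat" where
  "nvals G f = length (fvals G f)"

definition subV :: "graph \<Rightarrow> filt \<Rightarrow> nat \<Rightarrow> nat set" where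
  "subV G f i = {v\<in>gV G. fst f v \<le> fvals G f ! i}"
definition subE :: "graph \<Rightarrow> filt \<Rightarrow> nat \<Rightarrow> nat set" where
  "subE G f i = {e\<in>gE G. snd f e \<le> fvals G f ! i}"

text \<open>Intermediate complex IC_i: cells of G_i minus G_(i-1), plus endpoints of those edges.\<close>
definition ICE :: "graph \<Rightarrow> filt \<Rightarrow> nat \<Rightarrow> nat set" where
  "ICE G f i = {e\<in>gE G. snd f e = fvals G f ! i}"
definition ICV :: "graph \<Rightarrow> filt \<Rightarrow> nat \<Rightarrow> nat set" where
  "ICV G f i = {v\<in>gV G. fst f v = fvals G f ! i} \<union>
               {v. \<exists>e\<in>ICE G f i. v = fst (ends G e) \<or> v = snd (ends G e)}"

text \<open>A space of the form S/A: S a subgraph of G (vertex set SV, edge set SE) and A a subgraph of S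
  (AV, AE) collapsed to one point \<open>None\<close>; if A is empty nothing is collapsed.
  0-cells are labelled by \<open>nat option\<close>, 1-cells by \<open>nat\<close>.\<close>
type_synonym space = "nat set \<times> nat set \<times> nat set \<times> nat set"

definition cproj :: "space \<Rightarrow> nat \<Rightarrow> nat option" where
  "cproj X v = (case X of (SV, SE, AV, AE) \<Rightarrow> if v \<in> AV then None else Some v)"

definition cells0 :: "space \<Rightarrow> nat option set" where
  "cells0 X = (case X of (SV, SE, AV, AE) \<Rightarrow> cproj X ` SV)"

definition cells1 :: "space \<Rightarrow> nat set" where
  "cells1 X = (case X of (SV, SE, AV, AE) \<Rightarrow> SE - AE)"

text \<open>Vector space of Z/2-valued functions (chains are those supported on the cells).\<close>
definition fscale :: "'b::field \<Rightarrow> ('a \<Rightarrow> 'b) \<Rightarrow> ('a \<Rightarrow> 'b)" where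
  "fscale c g = (\<lambda>x. c * g x)"

abbreviation fdim :: "('a \<Rightarrow> bit) set \<Rightarrow> nat" where
  "fdim \<equiv> vector_space.dim (fscale :: bit \<Rightarrow> _)"
abbreviation fspan :: "('a \<Rightarrow> bit) set \<Rightarrow> ('a \<Rightarrow> bit) set" where
  "fspan \<equiv> module.span (fscale :: bit \<Rightarrow> _)"

definition C0 :: "space \<Rightarrow> (nat option \<Rightarrow> bit) set" where
  "C0 X = {c. \<forall>x. x \<notin> cells0 X \<longrightarrow> c x = 0}"
definition C1 :: "space \<Rightarrow> (nat \<Rightarrow> bit) set" where
  "C1 X = {c. \<forall>x. x \<notin> cells1 X \<longrightarrow> c x = 0}"

text \<open>Cellular boundary (mod 2): a loop has boundary 0.\<close>
definition bdry :: "graph \<Rightarrow> space \<Rightarrow> (nat \<Rightarrow> bit) \<Rightarrow> (nat option \<Rightarrow> bit)" where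
  "bdry G X c = (\<lambda>y. \<Sum>e\<in>cells1 X. c e *
      ((if cproj X (fst (ends G e)) = y then 1 else 0) + (if cproj X (snd (ends G e)) = y then 1 else 0)))"

definition Z1 :: "graph \<Rightarrow> space \<Rightarrow> (nat \<Rightarrow> bit) set" where
  "Z1 G X = {c \<in> C1 X. bdry G X c = (\<lambda>_. 0)}"
definition B0 :: "graph \<Rightarrow> space \<Rightarrow> (nat option \<Rightarrow> bit) set" where
  "B0 G X = bdry G X ` C1 X"

text \<open>Chain map induced by the cellular map X \<rightarrow> Y (inclusion followed by quotient), for
  X = S/A, Y = S'/A' with S \<subseteq> S', A \<subseteq> A'.\<close>
definition cmap0 :: "space \<Rightarrow> space \<Rightarrow> (nat option \<Rightarrow> bit) \<Rightarrow> (nat option \<Rightarrow> bit)" where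
  "cmap0 X Y c = (\<lambda>y. \<Sum>x\<in>cells0 X. if (case x of None \<Rightarrow> None | Some v \<Rightarrow> cproj Y v) = y
                                         then c x else 0)"
definition cmap1 :: "space \<Rightarrow> space \<Rightarrow> (nat \<Rightarrow> bit) \<Rightarrow> (nat \<Rightarrow> bit)" where
  "cmap1 X Y c = (\<lambda>e. if e \<in> cells1 Y then c e else 0)"

text \<open>Rank of the induced map H_k(X) \<rightarrow> H_k(Y) (coefficients Z/2):
  dim((f(Z_k X) + B_k Y)/B_k Y).  Here Z_0 = C_0, B_1 = 0, and H_k = 0 for k \<ge> 2.\<close>
definition hrank :: "graph \<Rightarrow> nat \<Rightarrow> space \<Rightarrow> space \<Rightarrow> nat" where
  "hrank G k X Y =
     (if k = 0 then fdim (cmap0 X Y ` C0 X \<union> B0 G Y) - fdim (B0 G Y)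
      else if k = 1 then fdim (cmap1 X Y ` Z1 G X)
      else 0)"

text \<open>For a persistence module of length L (positions 0..L-1) with rank function r i j
  (rank of the structure map from position i to position j, i \<le> j), the multiplicity of the
  interval (b,d): (b, enat d) means the class is born at b and is present up to position d-1
  (dies at d, d \<le> L-1); (b, \<infinity>) means it survives to position L-1.  This is the interval
  decomposition multiplicity, computed by the rank inclusion-exclusion formula.
  The diagram is represented by its multiplicity (count) function.\<close>
definition dgm :: "nat \<Rightarrow> (nat \<Rightarrow> nat \<Rightarrow> nat) \<Rightarrow> nat \<times> enat \<Rightarrow> nat" where
  "dgm L r bd = (case bd of
     (b, \<infinity>) \<Rightarrow> if b < L then nat (int (r b (L-1)) - (if b = 0 then 0 else int (r (b-1) (L-1)))) else 0
   | (b, enat d) \<Rightarrow> if b < d \<and> d < L then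
        nat (int (r b (d-1)) - int (r b d)
             - (if b = 0 then 0 else int (r (b-1) (d-1)))
             + (if b = 0 then 0 else int (r (b-1) d)))
      else 0)"

definition fwd_space :: "graph \<Rightarrow> filt \<Rightarrow> nat \<Rightarrow> space" where
  "fwd_space G f i = (subV G f i, subE G f i, {}, {})"

definition fwd_dgm :: "(graph \<Rightarrow> filt) \<Rightarrow> graph \<Rightarrow> nat \<Rightarrow> nat \<times> enat \<Rightarrow> nat" where
  "fwd_dgm F G k = dgm (nvals G (F G))
      (\<lambda>i j. hrank G k (fwd_space G (F G) i) (fwd_space G (F G) j))"

text \<open>Backward sequence: position j is G with IC_n \<union> ... \<union> IC_(n-j+1) collapsed to a point
  (position 0 is G, position n+1 is a point); maps are the quotient maps.\<close>
definition bwd_space :: "graph \<Rightarrow> filt \<Rightarrow> nat \<Rightarrow> space" where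
  "bwd_space G f j = (gV G, gE G,
      (\<Union>i\<in>{nvals G f - j..<nvals G f}. ICV G f i),
      (\<Union>i\<in>{nvals G f - j..<nvals G f}. ICE G f i))"

definition bwd_dgm :: "(graph \<Rightarrow> filt) \<Rightarrow> graph \<Rightarrow> nat \<Rightarrow> nat \<times> enat \<Rightarrow> nat" where
  "bwd_dgm F G k = dgm (nvals G (F G) + 1)
      (\<lambda>i j. hrank G k (bwd_space G (F G) i) (bwd_space G (F G) j))"

end

theory Submission imports Defs begin

lemma vs: "vector_space (fscale :: bit \<Rightarrow> ('a \<Rightarrow> bit) \<Rightarrow> ('a \<Rightarrow> bit))"
  apply unfold_locales
  apply (unfold fscale_def plus_fun_def)
  by (simp_all only: distrib_left distrib_right mult.assoc mult_1_left)

interpretation FV: vector_space "fscale :: bit \<Rightarrow> ('a \<Rightarrow> bit) \<Rightarrow> ('a \<Rightarrow> bit)"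
  by (rule vs)

definition supp :: "'a set \<Rightarrow> ('a \<Rightarrow> bit) set" where
  "supp T = {c. \<forall>x. x \<notin> T \<longrightarrow> c x = 0}"
definition dlt :: "'a \<Rightarrow> 'a \<Rightarrow> bit" where
  "dlt t = (\<lambda>x. if x = t then 1 else 0)"

lemma sum_fun_eval: "(sum f S) x = (\<Sum>v\<in>S. f v x)"
  by (induction S rule: infinite_finite_induct) auto

lemma supp_subspace: "FV.subspace (supp T)"
  unfolding FV.subspace_def supp_def fscale_def by auto

lemma dlt_inj: "dlt s = dlt t \<longleftrightarrow> s = t"
  unfolding dlt_def by (metis zero_neq_one)

lemma span_dlt: assumes "finite T" shows "FV.span (dlt ` T) = supp T"
proof
  show "FV.span (dlt ` T) \<subseteq> supp T"
    by (rule FV.span_minimal[OF _ supp_subspace]) (auto simp: supp_def dlt_def)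
  show "supp T \<subseteq> FV.span (dlt ` T)"
  proof
    fix c assume c: "c \<in> supp T"
    have "c = (\<Sum>t\<in>T. fscale (c t) (dlt t))"
    proof
      fix x
      have "(\<Sum>t\<in>T. fscale (c t) (dlt t)) x = (\<Sum>t\<in>T. c t * (if x = t then 1 else 0))"
        by (simp add: sum_fun_eval fscale_def dlt_def)
      also have "\<dots> = (\<Sum>t\<in>T. if t = x then c t else 0)"
        by (rule sum.cong) auto
      also have "\<dots> = (if x \<in> T then c x else 0)"
        using assms by (simp only: sum.delta)
      also have "\<dots> = c x" using c by (auto simp: supp_def)
      finally show "c x = (\<Sum>t\<in>T. fscale (c t) (dlt t)) x" by simp
    qed
    also have "\<dots> \<in> FV.span (dlt ` T)"
      by (intro FV.span_sum FV.span_scale FV.span_base) auto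
    finally show "c \<in> FV.span (dlt ` T)" .
  qed
qed

lemma indep_dlt: "FV.independent (dlt ` T)"
proof (unfold FV.independent_explicit_module, intro allI impI)
  fix t u v assume fin: "finite t" and sub: "t \<subseteq> dlt ` T" and s0: "(\<Sum>v\<in>t. fscale (u v) v) = 0"
    and v: "v \<in> t"
  obtain s where vs: "v = dlt s" using v sub by auto
  have "0 = (\<Sum>w\<in>t. fscale (u w) w) s" using s0 by simp
  also have "\<dots> = (\<Sum>w\<in>t. if w = v then u w else 0)"
    unfolding sum_fun_eval
  proof (rule sum.cong)
    fix w assume w: "w \<in> t"
    then obtain r where wr: "w = dlt r" using sub by auto
    show "fscale (u w) w s = (if w = v then u w else 0)"
    proof (cases "r = s")
      case True then show ?thesis using wr vs by (simp add: fscale_def dlt_def)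
    next
      case False
      then have "w \<noteq> v" using wr vs dlt_inj by metis
      then show ?thesis using wr False by (simp add: fscale_def dlt_def)
    qed
  qed simp
  also have "\<dots> = u v" using fin v by simp
  finally show "u v = 0" by simp
qed

lemma fdim_supp: assumes "finite T" "FV.span S = supp T" shows "fdim S = card T"
proof -
  have "fdim S = fdim (FV.span S)" by simp
  also have "\<dots> = fdim (FV.span (dlt ` T))" using assms span_dlt by metis
  also have "\<dots> = card (dlt ` T)" by (rule FV.dim_span_eq_card_independent[OF indep_dlt])
  also have "\<dots> = card T" by (rule card_image) (auto simp: inj_on_def dlt_inj)
  finally show ?thesis .
qed

lemma span_eq_supp: assumes "finite T" "dlt ` T \<subseteq> FV.span S" "S \<subseteq> supp T"
  shows "FV.span S = supp T"
proof
  show "FV.span S \<subseteq> supp T" using assms(3) by (rule FV.span_minimal[OF _ supp_subspace])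
  show "supp T \<subseteq> FV.span S"
    using span_dlt[OF assms(1)] FV.span_mono[OF assms(2)] by (simp add: FV.span_span)
qed

lemma fdim_zero: "fdim {0} = 0"
  by (metis FV.dim_span_eq_card_independent FV.independent_empty FV.span_empty card.empty)


definition pimg :: "space \<Rightarrow> nat option \<Rightarrow> nat option" where
  "pimg Y x = (case x of None \<Rightarrow> None | Some v \<Rightarrow> cproj Y v)"

lemma C0_supp: "C0 X = supp (cells0 X)" by (simp add: C0_def supp_def)
lemma C1_supp: "C1 X = supp (cells1 X)" by (simp add: C1_def supp_def)

lemma cmap0_alt: "cmap0 X Y c = (\<lambda>y. \<Sum>x\<in>cells0 X. if pimg Y x = y then c x else 0)"
  by (simp add: cmap0_def pimg_def)

lemma cmap0_dlt: assumes "finite (cells0 X)" "x \<in> cells0 X"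
  shows "cmap0 X Y (dlt x) = dlt (pimg Y x)"
proof
  fix y
  have "cmap0 X Y (dlt x) y = (\<Sum>x'\<in>cells0 X. if x' = x then (if pimg Y x = y then 1 else 0) else 0)"
    unfolding cmap0_alt by (rule sum.cong) (auto simp: dlt_def)
  also have "\<dots> = (if pimg Y x = y then 1 else 0)" using assms by (simp only: sum.delta) simp
  finally show "cmap0 X Y (dlt x) y = dlt (pimg Y x) y" by (auto simp: dlt_def)
qed

lemma cmap0_supp: "cmap0 X Y c \<in> supp (pimg Y ` cells0 X)"
  unfolding supp_def cmap0_alt by (auto intro!: sum.neutral)

lemma dlt_in_C0: "x \<in> cells0 X \<Longrightarrow> dlt x \<in> C0 X"
  by (auto simp: C0_def dlt_def)
lemma dlt_in_C1: "x \<in> cells1 X \<Longrightarrow> dlt x \<in> C1 X"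
  by (auto simp: C1_def dlt_def)

lemma bdry_noedge: "cells1 Y = {} \<Longrightarrow> bdry G Y c = 0"
  by (simp add: bdry_def fun_eq_iff)

lemma B0_noedge: "cells1 Y = {} \<Longrightarrow> B0 G Y = {0}"
  unfolding B0_def using bdry_noedge[of Y G] by (auto simp: C1_def)

lemma hrank0_noedge: assumes "finite (cells0 X)" "cells1 Y = {}"
  shows "hrank G 0 X Y = card (pimg Y ` cells0 X)"
proof -
  have fin: "finite (pimg Y ` cells0 X)" using assms by simp
  have "FV.span (cmap0 X Y ` C0 X \<union> {0}) = supp (pimg Y ` cells0 X)"
  proof (rule span_eq_supp[OF fin])
    show "dlt ` pimg Y ` cells0 X \<subseteq> FV.span (cmap0 X Y ` C0 X \<union> {0})"
    proof
      fix z assume "z \<in> dlt ` pimg Y ` cells0 X"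
      then obtain x where x: "x \<in> cells0 X" "z = dlt (pimg Y x)" by auto
      have "cmap0 X Y (dlt x) \<in> cmap0 X Y ` C0 X" using dlt_in_C0[OF x(1)] by (rule imageI)
      then have "z \<in> cmap0 X Y ` C0 X" using cmap0_dlt[OF assms(1) x(1), of Y] x(2) by simp
      then show "z \<in> FV.span (cmap0 X Y ` C0 X \<union> {0})" by (auto intro: FV.span_base)
    qed
    show "cmap0 X Y ` C0 X \<union> {0} \<subseteq> supp (pimg Y ` cells0 X)"
    proof (rule Un_least)
      show "cmap0 X Y ` C0 X \<subseteq> supp (pimg Y ` cells0 X)"
        by (rule image_subsetI) (rule cmap0_supp)
    qed (simp add: supp_def)
  qed
  then have "fdim (cmap0 X Y ` C0 X \<union> {0}) = card (pimg Y ` cells0 X)"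
    by (rule fdim_supp[OF fin])
  then show ?thesis using B0_noedge[OF assms(2), of G] by (simp add: hrank_def fdim_zero)
qed

lemma cmap1_zero: "cmap1 X Y 0 = 0" by (simp add: cmap1_def fun_eq_iff)

lemma hrank1_zero: "Z1 G X = {0} \<Longrightarrow> hrank G 1 X Y = 0"
  by (simp add: hrank_def cmap1_zero fdim_zero)

lemma Z1_noedge: "cells1 X = {} \<Longrightarrow> Z1 G X = {0}"
  using bdry_noedge[of X G] by (auto simp: Z1_def C1_def)

lemma bdry_sum: assumes "finite (cells1 Y)" "c \<in> C1 Y"
  shows "bdry G Y c = (\<Sum>e\<in>cells1 Y. fscale (c e) (bdry G Y (dlt e)))"
proof
  fix y
  have "bdry G Y c y = (\<Sum>e\<in>cells1 Y. c e *
      ((if cproj Y (fst (ends G e)) = y then 1 else 0) + (if cproj Y (snd (ends G e)) = y then 1 else 0)))"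
    by (simp only: bdry_def)
  also have "\<dots> = (\<Sum>e\<in>cells1 Y. fscale (c e) (bdry G Y (dlt e)) y)"
  proof (rule sum.cong[OF refl])
    fix e assume e: "e \<in> cells1 Y"
    have "bdry G Y (dlt e) y = (\<Sum>e'\<in>cells1 Y. if e' = e then
       ((if cproj Y (fst (ends G e)) = y then 1 else 0) + (if cproj Y (snd (ends G e)) = y then 1 else 0)) else 0)"
      unfolding bdry_def by (rule sum.cong) (auto simp: dlt_def)
    also have "\<dots> = ((if cproj Y (fst (ends G e)) = y then 1 else 0) + (if cproj Y (snd (ends G e)) = y then 1 else 0))"
      using assms e by (simp only: sum.delta) simp
    finally show "c e * ((if cproj Y (fst (ends G e)) = y then 1 else 0) + (if cproj Y (snd (ends G e)) = y then 1 else 0))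
       = fscale (c e) (bdry G Y (dlt e)) y" by (simp add: fscale_def)
  qed
  also have "\<dots> = (\<Sum>e\<in>cells1 Y. fscale (c e) (bdry G Y (dlt e))) y"
    by (simp only: sum_fun_eval)
  finally show "bdry G Y c y = (\<Sum>e\<in>cells1 Y. fscale (c e) (bdry G Y (dlt e))) y" .
qed

lemma span_B0: assumes "finite (cells1 Y)"
  shows "FV.span (B0 G Y) = FV.span (bdry G Y ` dlt ` cells1 Y)"
proof (rule FV.span_eq[THEN iffD2], rule conjI)
  show "B0 G Y \<subseteq> FV.span (bdry G Y ` dlt ` cells1 Y)"
  proof
    fix z assume "z \<in> B0 G Y"
    then obtain c where c: "c \<in> C1 Y" "z = bdry G Y c" by (auto simp: B0_def)
    then show "z \<in> FV.span (bdry G Y ` dlt ` cells1 Y)"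
      using bdry_sum[OF assms c(1), of G] by simp (intro FV.span_sum FV.span_scale FV.span_base imageI)
  qed
  show "bdry G Y ` dlt ` cells1 Y \<subseteq> FV.span (B0 G Y)"
    using dlt_in_C1[of _ Y] by (auto simp: B0_def intro!: FV.span_base)
qed

lemma fdim_B0: "finite (cells1 Y) \<Longrightarrow> fdim (B0 G Y) = fdim (bdry G Y ` dlt ` cells1 Y)"
  by (metis FV.dim_span span_B0)

lemma B0_supp: assumes "Y = (SV, SE, AV, AE)" "\<forall>e\<in>SE. fst (ends G e) \<in> SV \<and> snd (ends G e) \<in> SV"
  shows "B0 G Y \<subseteq> supp (cells0 Y)"
  using assms by (auto simp: B0_def supp_def bdry_def cells0_def cells1_def intro!: sum.neutral)

lemma hrank0_gen: assumes "finite (cells0 X)" "finite (cells0 Y)" "finite (cells1 Y)"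
  "Y = (SV, SE, AV, AE)" "\<forall>e\<in>SE. fst (ends G e) \<in> SV \<and> snd (ends G e) \<in> SV"
  "pimg Y ` cells0 X \<subseteq> cells0 Y"
  "dlt ` cells0 Y \<subseteq> FV.span (cmap0 X Y ` C0 X \<union> B0 G Y)"
  shows "hrank G 0 X Y = card (cells0 Y) - fdim (bdry G Y ` dlt ` cells1 Y)"
proof -
  have "FV.span (cmap0 X Y ` C0 X \<union> B0 G Y) = supp (cells0 Y)"
  proof (rule span_eq_supp[OF assms(2) assms(7)])
    show "cmap0 X Y ` C0 X \<union> B0 G Y \<subseteq> supp (cells0 Y)"
    proof -
      have "cmap0 X Y c \<in> supp (cells0 Y)" for c
        using cmap0_supp[of X Y c] assms(6) by (auto simp: supp_def)
      then show ?thesis using B0_supp[OF assms(4,5)] by blast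
    qed
  qed
  then have "fdim (cmap0 X Y ` C0 X \<union> B0 G Y) = card (cells0 Y)" by (rule fdim_supp[OF assms(2)])
  then show ?thesis by (simp add: hrank_def fdim_B0[OF assms(3)])
qed

lemma span_img: assumes "finite (cells0 X)" "x \<in> cells0 X"
  shows "dlt (pimg Y x) \<in> FV.span (cmap0 X Y ` C0 X \<union> B0 G Y)"
proof -
  have "cmap0 X Y (dlt x) \<in> cmap0 X Y ` C0 X" using dlt_in_C0[OF assms(2)] by (rule imageI)
  then show ?thesis using cmap0_dlt[OF assms, of Y] by (simp add: FV.span_base)
qed

lemma span_bd: assumes "e \<in> cells1 Y"
  shows "bdry G Y (dlt e) \<in> FV.span (cmap0 X Y ` C0 X \<union> B0 G Y)"
  using dlt_in_C1[OF assms] by (auto simp: B0_def intro!: FV.span_base)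

lemma dgm_const: assumes "\<And>i j. i \<le> j \<Longrightarrow> j < L \<Longrightarrow> r i j = c"
  shows "dgm L r = (\<lambda>bd. if bd = (0, \<infinity>) \<and> 0 < L then c else 0)"
proof
  fix bd :: "nat \<times> enat"
  obtain b d where bd: "bd = (b, d)" by fastforce
  show "dgm L r bd = (if bd = (0, \<infinity>) \<and> 0 < L then c else 0)"
  proof (cases d)
    case (enat n)
    then show ?thesis using assms by (auto simp: dgm_def bd)
  next
    case infinity
    then show ?thesis using assms by (auto simp: dgm_def bd)
  qed
qed



definition Fc :: "graph \<Rightarrow> filt" where
  "Fc G = (\<lambda>v. real (col G v), \<lambda>e. max (real (col G (fst (ends G e)))) (real (col G (snd (ends G e)))))"

definition G1 :: graph where "G1 = \<lparr>gV = {0,1}, gE = {}, ends = \<lambda>_. (0,0), col = \<lambda>_. 0\<rparr>"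
definition H1 :: graph where "H1 = \<lparr>gV = {0,1,2}, gE = {0}, ends = \<lambda>_. (0,2), col = \<lambda>v. if v = 2 then 1 else 0\<rparr>"
definition G2 :: graph where "G2 = \<lparr>gV = {0}, gE = {}, ends = \<lambda>_. (0,0), col = \<lambda>_. 0\<rparr>"
definition H2 :: graph where "H2 = \<lparr>gV = {0,1,2}, gE = {0,1}, ends = \<lambda>e. if e = 0 then (0,2) else (1,2), col = \<lambda>v. if v = 2 then 1 else 0\<rparr>"

lemma fv_G1: "fvals G1 (Fc G1) = [0]" by (simp add: fvals_def Fc_def G1_def)
lemma fv_H1: "fvals H1 (Fc H1) = [0,1]" by (simp add: fvals_def Fc_def H1_def insert_commute)
lemma fv_G2: "fvals G2 (Fc G2) = [0]" by (simp add: fvals_def Fc_def G2_def)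
lemma fv_H2: "fvals H2 (Fc H2) = [0,1]" by (simp add: fvals_def Fc_def H2_def insert_commute)

lemma nv: "nvals G1 (Fc G1) = 1" "nvals H1 (Fc H1) = 2" "nvals G2 (Fc G2) = 1" "nvals H2 (Fc H2) = 2"
  by (simp_all add: nvals_def fv_G1 fv_H1 fv_G2 fv_H2)

lemma fsG1: "fwd_space G1 (Fc G1) 0 = ({0,1},{},{},{})"
  by (simp add: fwd_space_def subV_def subE_def fv_G1) (auto simp: G1_def Fc_def)
lemma fsH1: "fwd_space H1 (Fc H1) 0 = ({0,1},{},{},{})" "fwd_space H1 (Fc H1) 1 = ({0,1,2},{0},{},{})"
  by (simp_all add: fwd_space_def subV_def subE_def fv_H1) (auto simp: H1_def Fc_def)
lemma fsH2: "fwd_space H2 (Fc H2) 0 = ({0,1},{},{},{})" "fwd_space H2 (Fc H2) 1 = ({0,1,2},{0,1},{},{})"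
  by (simp_all add: fwd_space_def subV_def subE_def fv_H2) (auto simp: H2_def Fc_def)
lemma bsG1: "bwd_space G1 (Fc G1) 0 = ({0,1},{},{},{})" "bwd_space G1 (Fc G1) 1 = ({0,1},{},{0,1},{})"
  by (simp_all add: bwd_space_def nv ICV_def ICE_def fv_G1) (auto simp: G1_def Fc_def)
lemma bsG2: "bwd_space G2 (Fc G2) 0 = ({0},{},{},{})" "bwd_space G2 (Fc G2) 1 = ({0},{},{0},{})"
  by (simp_all add: bwd_space_def nv ICV_def ICE_def fv_G2) (auto simp: G2_def Fc_def)
lemma bsH1: "bwd_space H1 (Fc H1) 0 = ({0,1,2},{0},{},{})" "bwd_space H1 (Fc H1) 1 = ({0,1,2},{0},{0,2},{0})"
  by (simp_all add: bwd_space_def nv ICV_def ICE_def fv_H1) (auto simp: H1_def Fc_def)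
lemma two_set: "{0..<2::nat} = {0,1}" by auto

lemma bsH2: "bwd_space H2 (Fc H2) 0 = ({0,1,2},{0,1},{},{})" "bwd_space H2 (Fc H2) 1 = ({0,1,2},{0,1},{0,1,2},{0,1})"
   "bwd_space H2 (Fc H2) 2 = ({0,1,2},{0,1},{0,1,2},{0,1})"
  by (simp_all add: bwd_space_def nv ICV_def ICE_def fv_H2 two_set) (auto simp: H2_def Fc_def)

lemmas cs = cells0_def cells1_def cproj_def pimg_def

lemma hA: "hrank G 0 ({0,1},{},{},{}) ({0,1},{},{},{}) = 2"
  by (subst hrank0_noedge) (simp_all add: cs card_insert_if)
lemma hAA': "hrank G 0 ({0,1},{},{},{}) ({0,1},{},{0,1},{}) = 1"
  by (subst hrank0_noedge) (simp_all add: cs card_insert_if)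
lemma hF1Q1: "hrank G 0 ({0,1,2},{0},{},{}) ({0,1,2},{0},{0,2},{0}) = 2"
  by (subst hrank0_noedge) (simp_all add: cs card_insert_if)
lemma hP: "hrank G 0 ({0},{},{},{}) ({0},{},{},{}) = 1"
  by (subst hrank0_noedge) (simp_all add: cs card_insert_if)
lemma hPP': "hrank G 0 ({0},{},{},{}) ({0},{},{0},{}) = 1"
  by (subst hrank0_noedge) (simp_all add: cs card_insert_if)
lemma hP'P': "hrank G 0 ({0},{},{0},{}) ({0},{},{0},{}) = 1"
  by (subst hrank0_noedge) (simp_all add: cs card_insert_if)
lemma hF2Q2: "hrank G 0 ({0,1,2},{0,1},{},{}) ({0,1,2},{0,1},{0,1,2},{0,1}) = 1"
  by (subst hrank0_noedge) (simp_all add: cs card_insert_if)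
lemma hQ2Q2: "hrank G 0 ({0,1,2},{0,1},{0,1,2},{0,1}) ({0,1,2},{0,1},{0,1,2},{0,1}) = 1"
  by (subst hrank0_noedge) (simp_all add: cs card_insert_if)

lemma w1: "bdry H1 ({0,1,2},{0},{},{}) (dlt 0) = dlt (Some 0) + dlt (Some 2)"
  by (simp add: bdry_def fun_eq_iff cs dlt_def H1_def)

lemma w2: "bdry H2 ({0,1,2},{0,1},{},{}) (dlt 0) = dlt (Some 0) + dlt (Some 2)"
  by (simp add: bdry_def fun_eq_iff cs dlt_def H2_def)
lemma w3: "bdry H2 ({0,1,2},{0,1},{},{}) (dlt 1) = dlt (Some 1) + dlt (Some 2)"
  by (simp add: bdry_def fun_eq_iff cs dlt_def H2_def)

lemma dlt_sum_eq: "dlt (Some 2) = (dlt (Some 0) + dlt (Some 2)) + dlt (Some (0::nat))"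
  by (simp add: fun_eq_iff dlt_def)

lemma ind1: "FV.independent {dlt (Some 0) + dlt (Some (2::nat))}"
proof -
  have "dlt (Some 0) + dlt (Some (2::nat)) \<noteq> 0"
    by (auto simp: fun_eq_iff dlt_def dest: spec[of _ "Some 0"])
  then show ?thesis by (simp add: FV.independent_insert FV.span_empty)
qed

lemma ind2: "FV.independent {dlt (Some 0) + dlt (Some (2::nat)), dlt (Some 1) + dlt (Some 2)}"
proof -
  have a: "dlt (Some 1) + dlt (Some (2::nat)) \<noteq> 0"
    by (auto simp: fun_eq_iff dlt_def dest: spec[of _ "Some 1"])
  have b: "dlt (Some 0) + dlt (Some (2::nat)) \<noteq> dlt (Some 1) + dlt (Some 2)"
    by (auto simp: fun_eq_iff dlt_def dest: spec[of _ "Some 0"])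
  have c: "dlt (Some 0) + dlt (Some (2::nat)) \<notin> FV.span {dlt (Some 1) + dlt (Some 2)}"
  proof -
    have "dlt (Some 0) + dlt (Some (2::nat)) \<noteq> fscale k (dlt (Some 1) + dlt (Some 2))" for k
    proof
      assume h: "dlt (Some 0) + dlt (Some (2::nat)) = fscale k (dlt (Some 1) + dlt (Some 2))"
      have "(dlt (Some 0) + dlt (Some (2::nat))) (Some 0) = 1" by (simp add: dlt_def)
      moreover have "fscale k (dlt (Some 1) + dlt (Some (2::nat))) (Some 0) = 0" by (simp add: fscale_def dlt_def)
      ultimately show False using h by simp
    qed
    then show ?thesis unfolding FV.span_singleton by auto
  qed
  show ?thesis using a b c by (simp add: FV.independent_insert FV.span_empty)
qed

lemma hX1: fixes X :: space
  assumes fx: "finite (cells0 X)" and x0: "Some 0 \<in> cells0 X" and x1: "Some 1 \<in> cells0 X"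
  and xi: "pimg ({0::nat,1,2},{0::nat},{},{}) ` cells0 X \<subseteq> cells0 ({0::nat,1,2},{0::nat},{},{})"
  shows "hrank H1 0 X ({0,1,2},{0},{},{}) = 2"
proof -
  let ?Y = "({0::nat,1,2},{0::nat},{},{}) :: space"
  have sp: "dlt ` cells0 ?Y \<subseteq> FV.span (cmap0 X ?Y ` C0 X \<union> B0 H1 ?Y)"
  proof -
    have s0: "dlt (Some 0) \<in> FV.span (cmap0 X ?Y ` C0 X \<union> B0 H1 ?Y)"
      using span_img[OF fx x0, of ?Y H1] by (simp add: cs)
    have s1: "dlt (Some 1) \<in> FV.span (cmap0 X ?Y ` C0 X \<union> B0 H1 ?Y)"
      using span_img[OF fx x1, of ?Y H1] by (simp add: cs)
    have "bdry H1 ?Y (dlt 0) \<in> FV.span (cmap0 X ?Y ` C0 X \<union> B0 H1 ?Y)"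
      by (rule span_bd) (simp add: cs)
    then have s2: "dlt (Some 2) \<in> FV.span (cmap0 X ?Y ` C0 X \<union> B0 H1 ?Y)"
      using s0 unfolding w1 by (subst dlt_sum_eq) (rule FV.span_add)
    show ?thesis using s0 s1 s2 by (simp add: cs)
  qed
  have "hrank H1 0 X ?Y = card (cells0 ?Y) - fdim (bdry H1 ?Y ` dlt ` cells1 ?Y)"
    by (rule hrank0_gen[OF fx _ _ refl _ xi sp]) (auto simp: cs H1_def)
  also have "bdry H1 ?Y ` dlt ` cells1 ?Y = {dlt (Some 0) + dlt (Some 2)}"
    using w1 by (simp add: cells1_def)
  also have "card (cells0 ?Y) = 3" by (simp add: cs)
  also have "fdim {dlt (Some 0) + dlt (Some (2::nat))} = 1"
    using FV.dim_eq_card_independent[OF ind1] by simp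
  finally show ?thesis by simp
qed

lemma hX2: fixes X :: space
  assumes fx: "finite (cells0 X)" and x0: "Some 0 \<in> cells0 X" and x1: "Some 1 \<in> cells0 X"
  and xi: "pimg ({0::nat,1,2},{0::nat,1},{},{}) ` cells0 X \<subseteq> cells0 ({0::nat,1,2},{0::nat,1},{},{})"
  shows "hrank H2 0 X ({0,1,2},{0,1},{},{}) = 1"
proof -
  let ?Y = "({0::nat,1,2},{0::nat,1},{},{}) :: space"
  have sp: "dlt ` cells0 ?Y \<subseteq> FV.span (cmap0 X ?Y ` C0 X \<union> B0 H2 ?Y)"
  proof -
    have s0: "dlt (Some 0) \<in> FV.span (cmap0 X ?Y ` C0 X \<union> B0 H2 ?Y)"
      using span_img[OF fx x0, of ?Y H2] by (simp add: cs)
    have s1: "dlt (Some 1) \<in> FV.span (cmap0 X ?Y ` C0 X \<union> B0 H2 ?Y)"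
      using span_img[OF fx x1, of ?Y H2] by (simp add: cs)
    have "bdry H2 ?Y (dlt 0) \<in> FV.span (cmap0 X ?Y ` C0 X \<union> B0 H2 ?Y)"
      by (rule span_bd) (simp add: cs)
    then have s2: "dlt (Some 2) \<in> FV.span (cmap0 X ?Y ` C0 X \<union> B0 H2 ?Y)"
      using s0 unfolding w2 by (subst dlt_sum_eq) (rule FV.span_add)
    show ?thesis using s0 s1 s2 by (simp add: cs)
  qed
  have "hrank H2 0 X ?Y = card (cells0 ?Y) - fdim (bdry H2 ?Y ` dlt ` cells1 ?Y)"
    by (rule hrank0_gen[OF fx _ _ refl _ xi sp]) (auto simp: cs H2_def)
  also have "bdry H2 ?Y ` dlt ` cells1 ?Y = {dlt (Some 0) + dlt (Some 2), dlt (Some 1) + dlt (Some 2)}"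
    using w2 w3 by (simp add: cells1_def)
  also have "card (cells0 ?Y) = 3" by (simp add: cs)
  also have "fdim {dlt (Some 0) + dlt (Some (2::nat)), dlt (Some 1) + dlt (Some 2)} = 2"
  proof -
    have "dlt (Some 0) + dlt (Some (2::nat)) \<noteq> dlt (Some 1) + dlt (Some 2)"
      by (auto simp: fun_eq_iff dlt_def dest: spec[of _ "Some 0"])
    then show ?thesis using FV.dim_eq_card_independent[OF ind2] by simp
  qed
  finally show ?thesis by simp
qed

lemma hAF1: "hrank H1 0 ({0,1},{},{},{}) ({0,1,2},{0},{},{}) = 2"
  by (rule hX1) (auto simp: cs)
lemma hF1F1: "hrank H1 0 ({0,1,2},{0},{},{}) ({0,1,2},{0},{},{}) = 2"
  by (rule hX1) (auto simp: cs)
lemma hAF2: "hrank H2 0 ({0,1},{},{},{}) ({0,1,2},{0,1},{},{}) = 1"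
  by (rule hX2) (auto simp: cs)
lemma hF2F2: "hrank H2 0 ({0,1,2},{0,1},{},{}) ({0,1,2},{0,1},{},{}) = 1"
  by (rule hX2) (auto simp: cs)

lemma sum0: "sum f {0::nat} = f 0" by simp

lemma Z1F1: "Z1 H1 ({0,1,2},{0},{},{}) = {0}"
proof
  show "{0} \<subseteq> Z1 H1 ({0,1,2},{0},{},{})"
    by (simp add: Z1_def C1_def bdry_def fun_eq_iff)
  show "Z1 H1 ({0,1,2},{0},{},{}) \<subseteq> {0}"
  proof
    let ?Y = "({0::nat,1,2},{0::nat},{},{}) :: space"
    fix c assume c: "c \<in> Z1 H1 ?Y"
    then have "bdry H1 ?Y c (Some 0) = 0" by (simp add: Z1_def)
    moreover have cy: "cells1 ?Y = {0}" by (simp add: cells1_def)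
    have "bdry H1 ?Y c (Some 0) = c 0 * ((if cproj ?Y (fst (ends H1 0)) = Some 0 then 1 else 0) + (if cproj ?Y (snd (ends H1 0)) = Some 0 then 1 else 0))"
      unfolding bdry_def cy by (simp only: sum0)
    also have "\<dots> = c 0" by (simp add: cs H1_def)
    finally have "c 0 = 0" using \<open>bdry H1 ?Y c (Some 0) = 0\<close> by simp
    have "c x = 0" for x
    proof (cases "x = 0")
      case False then show ?thesis using c by (simp add: Z1_def C1_def cells1_def)
    qed (use \<open>c 0 = 0\<close> in simp)
    then show "c \<in> {0}" by (simp add: fun_eq_iff)
  qed
qed

lemma sum01: "sum f {0,1::nat} = f 0 + f 1" by simp

lemma Z1F2: "Z1 H2 ({0,1,2},{0,1},{},{}) = {0}"
proof
  show "{0} \<subseteq> Z1 H2 ({0,1,2},{0,1},{},{})"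
    by (simp add: Z1_def C1_def bdry_def fun_eq_iff)
  show "Z1 H2 ({0,1,2},{0,1},{},{}) \<subseteq> {0}"
  proof
    let ?Y = "({0::nat,1,2},{0::nat,1},{},{}) :: space"
    fix c assume c: "c \<in> Z1 H2 ?Y"
    then have z: "bdry H2 ?Y c (Some 0) = 0" "bdry H2 ?Y c (Some 1) = 0" by (simp_all add: Z1_def)
    have cy: "cells1 ?Y = {0,1}" by (simp add: cells1_def)
    have "bdry H2 ?Y c (Some 0) = c 0 * ((if cproj ?Y (fst (ends H2 0)) = Some 0 then 1 else 0) + (if cproj ?Y (snd (ends H2 0)) = Some 0 then 1 else 0))
       + c 1 * ((if cproj ?Y (fst (ends H2 1)) = Some 0 then 1 else 0) + (if cproj ?Y (snd (ends H2 1)) = Some 0 then 1 else 0))"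
      unfolding bdry_def cy by (simp only: sum01)
    also have "\<dots> = c 0" by (simp add: cs H2_def)
    finally have 0: "c 0 = 0" using z by simp
    have "bdry H2 ?Y c (Some 1) = c 0 * ((if cproj ?Y (fst (ends H2 0)) = Some 1 then 1 else 0) + (if cproj ?Y (snd (ends H2 0)) = Some 1 then 1 else 0))
       + c 1 * ((if cproj ?Y (fst (ends H2 1)) = Some 1 then 1 else 0) + (if cproj ?Y (snd (ends H2 1)) = Some 1 then 1 else 0))"
      unfolding bdry_def cy by (simp only: sum01)
    also have "\<dots> = c 1" by (simp add: cs H2_def)
    finally have 1: "c 1 = 0" using z by simp
    have "c x = 0" for x
    proof -
      consider "x = 0" | "x = 1" | "x \<noteq> 0 \<and> x \<noteq> 1" by blast
      then show ?thesis
      proof cases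
        case 3 then show ?thesis using c by (simp add: Z1_def C1_def cells1_def)
      qed (use 0 1 in simp_all)
    qed
    then show "c \<in> {0}" by (simp add: fun_eq_iff)
  qed
qed

lemma Z1ne: "Z1 G (V,{},AV,AE) = {0}" "Z1 G ({0,1,2},{0,1},{0,1,2},{0,1}) = {0}"
  by (rule Z1_noedge; simp add: cs)+

lemma hr_split: "hrank G k X Y = (if k = 0 then hrank G 0 X Y else if k = 1 then hrank G 1 X Y else 0)"
  by (simp add: hrank_def)

lemma le2: "(i::nat) \<le> j \<Longrightarrow> j < 2 \<Longrightarrow> (i = 0 \<and> j = 0) \<or> (i = 0 \<and> j = 1) \<or> (i = 1 \<and> j = 1)" by auto
lemma le3: "(i::nat) \<le> j \<Longrightarrow> j < 3 \<Longrightarrow> (i = 0 \<and> j = 0) \<or> (i = 0 \<and> j = 1) \<or> (i = 0 \<and> j = 2) \<or>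
   (i = 1 \<and> j = 1) \<or> (i = 1 \<and> j = 2) \<or> (i = 2 \<and> j = 2)" by auto

lemma kc: assumes "hrank G 0 X Y = c" "Z1 G X = {0}"
  shows "hrank G k X Y = (if k = 0 then c else 0)"
  using assms hrank1_zero[OF assms(2)] hr_split[of G k X Y] by auto

lemma fG1: "fwd_dgm Fc G1 k = (\<lambda>bd. if bd = (0, \<infinity>) \<and> 0 < (1::nat) then (if k = 0 then 2 else 0) else 0)"
proof -
  have r: "hrank G1 k (fwd_space G1 (Fc G1) 0) (fwd_space G1 (Fc G1) 0) = (if k = 0 then 2 else 0)"
    unfolding fsG1 by (rule kc[OF hA Z1ne(1)])
  show ?thesis unfolding fwd_dgm_def nv by (rule dgm_const) (use r in simp)
qed

lemma fH1: "fwd_dgm Fc H1 k = (\<lambda>bd. if bd = (0, \<infinity>) \<and> 0 < (2::nat) then (if k = 0 then 2 else 0) else 0)"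
proof -
  have r00: "hrank H1 k (fwd_space H1 (Fc H1) 0) (fwd_space H1 (Fc H1) 0) = (if k = 0 then 2 else 0)"
    unfolding fsH1 by (rule kc[OF hA Z1ne(1)])
  have r01: "hrank H1 k (fwd_space H1 (Fc H1) 0) (fwd_space H1 (Fc H1) 1) = (if k = 0 then 2 else 0)"
    unfolding fsH1 by (rule kc[OF hAF1 Z1ne(1)])
  have r11: "hrank H1 k (fwd_space H1 (Fc H1) 1) (fwd_space H1 (Fc H1) 1) = (if k = 0 then 2 else 0)"
    unfolding fsH1 by (rule kc[OF hF1F1 Z1F1])
  show ?thesis unfolding fwd_dgm_def nv
    apply (rule dgm_const)
    subgoal premises p for i j using le2[OF p] r00 r01 r11 by (elim disjE conjE) simp_all
    done
qed

lemma n3: "(2::nat) + 1 = 3" by simp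

lemma bG2: "bwd_dgm Fc G2 k = (\<lambda>bd. if bd = (0, \<infinity>) \<and> 0 < (2::nat) then (if k = 0 then 1 else 0) else 0)"
proof -
  have r00: "hrank G2 k (bwd_space G2 (Fc G2) 0) (bwd_space G2 (Fc G2) 0) = (if k = 0 then 1 else 0)"
    unfolding bsG2 by (rule kc[OF hP Z1ne(1)])
  have r01: "hrank G2 k (bwd_space G2 (Fc G2) 0) (bwd_space G2 (Fc G2) 1) = (if k = 0 then 1 else 0)"
    unfolding bsG2 by (rule kc[OF hPP' Z1ne(1)])
  have r11: "hrank G2 k (bwd_space G2 (Fc G2) 1) (bwd_space G2 (Fc G2) 1) = (if k = 0 then 1 else 0)"
    unfolding bsG2 by (rule kc[OF hP'P' Z1ne(1)])
  show ?thesis unfolding bwd_dgm_def nv one_add_one n3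
    apply (rule dgm_const)
    subgoal premises p for i j using le2[OF p] r00 r01 r11 by (elim disjE conjE) simp_all
    done
qed

lemma bH2: "bwd_dgm Fc H2 k = (\<lambda>bd. if bd = (0, \<infinity>) \<and> 0 < (3::nat) then (if k = 0 then 1 else 0) else 0)"
proof -
  have r00: "hrank H2 k (bwd_space H2 (Fc H2) 0) (bwd_space H2 (Fc H2) 0) = (if k = 0 then 1 else 0)"
    unfolding bsH2 by (rule kc[OF hF2F2 Z1F2])
  have r01: "hrank H2 k (bwd_space H2 (Fc H2) 0) (bwd_space H2 (Fc H2) 1) = (if k = 0 then 1 else 0)"
    unfolding bsH2 by (rule kc[OF hF2Q2 Z1F2])
  have r02: "hrank H2 k (bwd_space H2 (Fc H2) 0) (bwd_space H2 (Fc H2) 2) = (if k = 0 then 1 else 0)"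
    unfolding bsH2 by (rule kc[OF hF2Q2 Z1F2])
  have r11: "hrank H2 k (bwd_space H2 (Fc H2) 1) (bwd_space H2 (Fc H2) 1) = (if k = 0 then 1 else 0)"
    unfolding bsH2 by (rule kc[OF hQ2Q2 Z1ne(2)])
  have r12: "hrank H2 k (bwd_space H2 (Fc H2) 1) (bwd_space H2 (Fc H2) 2) = (if k = 0 then 1 else 0)"
    unfolding bsH2 by (rule kc[OF hQ2Q2 Z1ne(2)])
  have r22: "hrank H2 k (bwd_space H2 (Fc H2) 2) (bwd_space H2 (Fc H2) 2) = (if k = 0 then 1 else 0)"
    unfolding bsH2 by (rule kc[OF hQ2Q2 Z1ne(2)])
  show ?thesis unfolding bwd_dgm_def nv one_add_one n3
    apply (rule dgm_const)
    subgoal premises p for i j using le3[OF p] r00 r01 r02 r11 r12 r22 by (elim disjE conjE) simp_all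
    done
qed


lemma bG1: "bwd_dgm Fc G1 0 (0, enat 1) = 1"
proof -
  have "bwd_dgm Fc G1 0 (0, enat 1) = nat (int (hrank G1 0 (bwd_space G1 (Fc G1) 0) (bwd_space G1 (Fc G1) 0))
     - int (hrank G1 0 (bwd_space G1 (Fc G1) 0) (bwd_space G1 (Fc G1) 1)))"
    by (simp add: bwd_dgm_def nv dgm_def)
  also have "\<dots> = 1" unfolding bsG1 hA hAA' by simp
  finally show ?thesis .
qed
lemma bH1: "bwd_dgm Fc H1 0 (0, enat 1) = 0"
proof -
  have "bwd_dgm Fc H1 0 (0, enat 1) = nat (int (hrank H1 0 (bwd_space H1 (Fc H1) 0) (bwd_space H1 (Fc H1) 0))
     - int (hrank H1 0 (bwd_space H1 (Fc H1) 0) (bwd_space H1 (Fc H1) 1)))"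
    by (simp add: bwd_dgm_def nv dgm_def)
  also have "\<dots> = 0" unfolding bsH1 hF1F1 hF1Q1 by simp
  finally show ?thesis .
qed
lemma fG2: "fwd_dgm Fc G2 0 (0, enat 1) = 0"
  by (simp add: fwd_dgm_def nv dgm_def)
lemma fH2: "fwd_dgm Fc H2 0 (0, enat 1) = 1"
proof -
  have "fwd_dgm Fc H2 0 (0, enat 1) = nat (int (hrank H2 0 (fwd_space H2 (Fc H2) 0) (fwd_space H2 (Fc H2) 0))
     - int (hrank H2 0 (fwd_space H2 (Fc H2) 0) (fwd_space H2 (Fc H2) 1)))"
    by (simp add: fwd_dgm_def nv dgm_def)
  also have "\<dots> = 1" unfolding fsH2 hA hAF2 by simp
  finally show ?thesis .
qed

lemma wf: "wf_graph G1" "wf_graph H1" "wf_graph G2" "wf_graph H2"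
  by (auto simp: wf_graph_def G1_def H1_def G2_def H2_def)

lemma pe: "perm_equiv_filtration Fc"
proof -
  have 1: "is_filtration G (Fc G)" for G by (simp add: is_filtration_def Fc_def)
  have 2: "(\<forall>v\<in>gV G. fst (Fc H) (pv v) = fst (Fc G) v) \<and> (\<forall>e\<in>gE G. snd (Fc H) (pe e) = snd (Fc G) e)"
    if wG: "wf_graph G" and iso: "graph_iso G H pv pe" for G H pv pe
  proof (intro conjI ballI)
    fix v assume "v \<in> gV G"
    then show "fst (Fc H) (pv v) = fst (Fc G) v" using iso by (simp add: graph_iso_def Fc_def)
  next
    fix e assume e: "e \<in> gE G"
    have ab: "fst (ends G e) \<in> gV G" "snd (ends G e) \<in> gV G" using wG e by (auto simp: wf_graph_def)
    have c: "\<forall>v\<in>gV G. col H (pv v) = col G v" using iso by (simp add: graph_iso_def)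
    have "ends H (pe e) = (pv (fst (ends G e)), pv (snd (ends G e))) \<or>
          ends H (pe e) = (pv (snd (ends G e)), pv (fst (ends G e)))"
      using iso e by (simp add: graph_iso_def)
    then show "snd (Fc H) (pe e) = snd (Fc G) e"
      using c ab by (auto simp: Fc_def max.commute)
  qed
  show ?thesis unfolding perm_equiv_filtration_def using 1 2 by blast
qed

lemma part1: "wf_graph G1 \<and> wf_graph H1 \<and> (\<forall>k. fwd_dgm Fc G1 k = fwd_dgm Fc H1 k) \<and>
        (\<exists>k. bwd_dgm Fc G1 k \<noteq> bwd_dgm Fc H1 k)"
proof (intro conjI allI exI)
  show "wf_graph G1" "wf_graph H1" by (rule wf)+
  fix k show "fwd_dgm Fc G1 k = fwd_dgm Fc H1 k" unfolding fG1 fH1 by simp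
next
  show "bwd_dgm Fc G1 0 \<noteq> bwd_dgm Fc H1 0"
  proof
    assume "bwd_dgm Fc G1 0 = bwd_dgm Fc H1 0"
    then have "bwd_dgm Fc G1 0 (0, enat 1) = bwd_dgm Fc H1 0 (0, enat 1)" by simp
    then show False unfolding bG1 bH1 by simp
  qed
qed

lemma part2: "wf_graph G2 \<and> wf_graph H2 \<and> (\<forall>k. bwd_dgm Fc G2 k = bwd_dgm Fc H2 k) \<and>
        (\<exists>k. fwd_dgm Fc G2 k \<noteq> fwd_dgm Fc H2 k)"
proof (intro conjI allI exI)
  show "wf_graph G2" "wf_graph H2" by (rule wf)+
  fix k show "bwd_dgm Fc G2 k = bwd_dgm Fc H2 k" unfolding bG2 bH2 by simp
next
  show "fwd_dgm Fc G2 0 \<noteq> fwd_dgm Fc H2 0"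
  proof
    assume "fwd_dgm Fc G2 0 = fwd_dgm Fc H2 0"
    then have "fwd_dgm Fc G2 0 (0, enat 1) = fwd_dgm Fc H2 0 (0, enat 1)" by simp
    then show False unfolding fG2 fH2 by simp
  qed
qed

theorem proposition1:
  shows "(\<exists>F. perm_equiv_filtration F \<and>
           (\<exists>G H. wf_graph G \<and> wf_graph H \<and>
              (\<forall>k. fwd_dgm F G k = fwd_dgm F H k) \<and> (\<exists>k. bwd_dgm F G k \<noteq> bwd_dgm F H k))) \<and>
         (\<exists>F. perm_equiv_filtration F \<and>
           (\<exists>G H. wf_graph G \<and> wf_graph H \<and>
              (\<forall>k. bwd_dgm F G k = bwd_dgm F H k) \<and> (\<exists>k. fwd_dgm F G k \<noteq> fwd_dgm F H k)))"
  using pe part1 part2 by blast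

end
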